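(* Let $p_1,\dots,p_k$ be finitely many distinct primes. Then the complex numbers $\ln(\gamma_{p_1}),\dots,\ln(\gamma_{p_k})$ are linearly independent over $\mathbb{Q}$.
   Context: For a prime $p$, define $$\gamma_p := i\cdot\frac{2^{p-1}-1}{2^{p-1}}+\frac{1}{2^{p-1}}\sqrt{2^p-1}.$$ Here $\ln$ is the principal branch of the complex logarithm. With this choice, $\ln(\gamma_p)= i\arccos(1-2^{-p+1})$ holds. *)

theory Defs
  imports "HOL-Analysis.Analysis"
begin

definition gamma_p :: "nat \<Rightarrow> complex" where
  "gamma_p p = \<i> * complex_of_real ((2 ^ (p - 1) - 1) / 2 ^ (p - 1))
             + complex_of_real (sqrt (2 ^ p - 1) / 2 ^ (p - 1))"

end

theory Submission imports Defs "HOL-Computational_Algebra.Nth_Powers" "HOL-Number_Theory.Number_Theory"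
begin

fun KK :: "nat list \<Rightarrow> complex set" where
  "KK [] = {Complex a b | a b. a \<in> \<rat> \<and> b \<in> \<rat>}"
| "KK (m # ms) = {x + y * complex_of_real (sqrt (real m)) | x y. x \<in> KK ms \<and> y \<in> KK ms}"

lemma KK_ConsI: "x \<in> KK ms \<Longrightarrow> y \<in> KK ms \<Longrightarrow> z = x + y * complex_of_real (sqrt (real m)) \<Longrightarrow> z \<in> KK (m#ms)"
  by auto

lemma KK_ConsE: "z \<in> KK (m#ms) \<Longrightarrow> (\<And>x y. x \<in> KK ms \<Longrightarrow> y \<in> KK ms \<Longrightarrow> z = x + y * complex_of_real (sqrt (real m)) \<Longrightarrow> P) \<Longrightarrow> P"
  by auto

lemma KK_NilI: "a \<in> \<rat> \<Longrightarrow> b \<in> \<rat> \<Longrightarrow> z = Complex a b \<Longrightarrow> z \<in> KK []"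
  by auto

lemma K_real_rat: "a \<in> \<rat> \<Longrightarrow> complex_of_real a \<in> KK ms"
proof (induction ms arbitrary: a)
  case Nil
  then show ?case by (intro KK_NilI[of a 0]) (auto simp: complex_eq_iff)
next
  case (Cons m ms)
  show ?case by (rule KK_ConsI[of "complex_of_real a" _ 0]) (use Cons Cons.IH[of 0] in auto)
qed

lemma K_0: "0 \<in> KK ms" using K_real_rat[of 0 ms] by simp
lemma K_1: "1 \<in> KK ms" using K_real_rat[of 1 ms] by simp

lemma K_ii: "\<i> \<in> KK ms"
proof (induction ms)
  case Nil
  then show ?case by (intro KK_NilI[of 0 1]) (auto simp: complex_eq_iff)
next
  case (Cons m ms)
  show ?case by (rule KK_ConsI[of "\<i>" _ 0]) (use Cons K_0 in auto)
qed

lemma K_add: "x \<in> KK ms \<Longrightarrow> y \<in> KK ms \<Longrightarrow> x + y \<in> KK ms"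
proof (induction ms arbitrary: x y)
  case Nil
  then obtain a b c d where "a \<in> \<rat>" "b \<in> \<rat>" "c \<in> \<rat>" "d \<in> \<rat>" "x = Complex a b" "y = Complex c d" by auto
  then show ?case by (intro KK_NilI[of "a+c" "b+d"]) (auto simp: complex_eq_iff)
next
  case (Cons m ms)
  from Cons.prems obtain x1 x2 y1 y2 where h: "x1 \<in> KK ms" "x2 \<in> KK ms" "y1 \<in> KK ms" "y2 \<in> KK ms"
    "x = x1 + x2 * complex_of_real (sqrt (real m))" "y = y1 + y2 * complex_of_real (sqrt (real m))"
    by (auto elim!: KK_ConsE)
  show ?case by (rule KK_ConsI[of "x1 + y1" _ "x2 + y2"]) (use Cons.IH h in \<open>auto simp: algebra_simps\<close>)
qed

lemma K_uminus: "x \<in> KK ms \<Longrightarrow> - x \<in> KK ms"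
proof (induction ms arbitrary: x)
  case Nil
  then obtain a b where "a \<in> \<rat>" "b \<in> \<rat>" "x = Complex a b" by auto
  then show ?case by (intro KK_NilI[of "-a" "-b"]) (auto simp: complex_eq_iff)
next
  case (Cons m ms)
  from Cons.prems obtain x1 x2 where h: "x1 \<in> KK ms" "x2 \<in> KK ms"
    "x = x1 + x2 * complex_of_real (sqrt (real m))"
    by (auto elim!: KK_ConsE)
  show ?case by (rule KK_ConsI[of "- x1" _ "- x2"]) (use Cons.IH h in \<open>auto simp: algebra_simps\<close>)
qed

lemma K_diff: "x \<in> KK ms \<Longrightarrow> y \<in> KK ms \<Longrightarrow> x - y \<in> KK ms"
  using K_add[of x ms "- y"] K_uminus[of y ms] by simp

lemma K_nat: "complex_of_real (real n) \<in> KK ms"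
  by (rule K_real_rat) simp

lemma K_mult: "x \<in> KK ms \<Longrightarrow> y \<in> KK ms \<Longrightarrow> x * y \<in> KK ms"
proof (induction ms arbitrary: x y)
  case Nil
  then obtain a b c d where "a \<in> \<rat>" "b \<in> \<rat>" "c \<in> \<rat>" "d \<in> \<rat>" "x = Complex a b" "y = Complex c d" by auto
  then show ?case by (intro KK_NilI[of "a*c - b*d" "a*d+b*c"]) (auto simp: complex_eq_iff)
next
  case (Cons m ms)
  define s where "s = complex_of_real (sqrt (real m))"
  have ss: "s * s = complex_of_real (real m)" unfolding s_def
    by (simp flip: of_real_mult)
  from Cons.prems obtain x1 x2 y1 y2 where h: "x1 \<in> KK ms" "x2 \<in> KK ms" "y1 \<in> KK ms" "y2 \<in> KK ms"
    "x = x1 + x2 * s" "y = y1 + y2 * s"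
    by (auto simp: s_def elim!: KK_ConsE)
  have "x * y = (x1 * y1 + x2 * y2 * (s * s)) + (x1 * y2 + x2 * y1) * s"
    unfolding h by (simp add: algebra_simps)
  also have "\<dots> = (x1 * y1 + x2 * y2 * complex_of_real (real m)) + (x1 * y2 + x2 * y1) * s"
    by (simp add: ss)
  finally have e: "x * y = (x1 * y1 + x2 * y2 * complex_of_real (real m)) + (x1 * y2 + x2 * y1) * s" .
  show ?case
  proof (rule KK_ConsI[OF _ _ e[unfolded s_def]])
    show "x1 * y1 + x2 * y2 * complex_of_real (real m) \<in> KK ms"
      using Cons.IH h K_nat K_add by metis
    show "x1 * y2 + x2 * y1 \<in> KK ms"
      using Cons.IH h K_add by metis
  qed
qed

lemma K_mono: "x \<in> KK ms \<Longrightarrow> x \<in> KK (m # ms)"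
  by (rule KK_ConsI[of x _ 0]) (auto simp: K_0)

lemma K_sqrt: "m \<in> set ms \<Longrightarrow> complex_of_real (sqrt (real m)) \<in> KK ms"
proof (induction ms)
  case Nil
  then show ?case by simp
next
  case (Cons a ms)
  show ?case
  proof (cases "m = a")
    case True
    then show ?thesis by (intro KK_ConsI[of 0 _ 1]) (auto simp: K_0 K_1)
  next
    case False
    then show ?thesis using Cons K_mono by auto
  qed
qed

lemma K_prod: "finite A \<Longrightarrow> (\<And>a. a \<in> A \<Longrightarrow> f a \<in> KK ms) \<Longrightarrow> prod f A \<in> KK ms"
  by (induction A rule: finite_induct) (use K_1 K_mult in auto)

lemma K_power: "x \<in> KK ms \<Longrightarrow> x ^ n \<in> KK ms"
  by (induction n) (use K_1 K_mult in auto)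


definition nsq :: "nat \<Rightarrow> bool" where "nsq m \<longleftrightarrow> \<not> is_nth_power 2 m"

lemma sqrt_rat_square:
  assumes "sqrt (real n) \<in> \<rat>"
  shows "is_nth_power 2 n"
proof -
  obtain a b :: nat where b: "b \<noteq> 0" and e: "\<bar>sqrt (real n)\<bar> = real a / real b" and c: "coprime a b"
    using Rats_abs_nat_div_natE[OF assms] by metis
  have e1: "sqrt (real n) = real a / real b" using e by simp
  have "(sqrt (real n))^2 = (real a / real b)^2" by (simp only: e1)
  then have "real n = (real a / real b)^2" by simp
  then have "real n * (real b)^2 = (real a)^2" using b by (simp add: field_simps)
  then have "real (n * b^2) = real (a^2)" by simp
  then have e2: "n * b^2 = a^2" by (simp only: of_nat_eq_iff)
  have d: "b^2 dvd a^2" unfolding e2[symmetric] by simp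
  have "coprime (a^2) (b^2)" using c by simp
  then have c2: "coprime (b^2) (a^2)" by (subst coprime_commute)
  have "is_unit (b^2)" by (rule coprime_common_divisor[OF c2 dvd_refl d])
  then have "b = 1" by simp
  then show ?thesis using e2 by (auto intro: is_nth_powerI)
qed

lemma nsq_pos: "nsq m \<Longrightarrow> m > 0"
  unfolding nsq_def by (cases m) auto

lemma nsq_mult: "nsq a \<Longrightarrow> nsq b \<Longrightarrow> coprime a b \<Longrightarrow> nsq (a * b)"
proof -
  assume a: "nsq a" and b: "nsq b" and c: "coprime a b"
  have "a > 0" "b > 0" using nsq_pos a b by auto
  show "nsq (a * b)" unfolding nsq_def
  proof
    assume "is_nth_power 2 (a * b)"
    then have "is_nth_power 2 a" using is_nth_power_mult_coprime_natD(1)[OF c _ \<open>a > 0\<close> \<open>b > 0\<close>] by blast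
    then show False using a unfolding nsq_def by blast
  qed
qed

lemma K_field:
  assumes "sorted_wrt coprime ms" "\<forall>m\<in>set ms. nsq m"
  shows "(\<forall>x\<in>KK ms. x \<noteq> 0 \<longrightarrow> inverse x \<in> KK ms) \<and>
    (\<forall>m. nsq m \<and> (\<forall>m'\<in>set ms. coprime m m') \<longrightarrow> complex_of_real (sqrt (real m)) \<notin> KK ms)"
  using assms
proof (induction ms)
  case Nil
  have "inverse x \<in> KK []" if "x \<in> KK []" for x
  proof -
    from that obtain a b where "a \<in> \<rat>" "b \<in> \<rat>" "x = Complex a b" by auto
    then show ?thesis by (intro KK_NilI[of "a / (a\<^sup>2 + b\<^sup>2)" "- b / (a\<^sup>2 + b\<^sup>2)"]) (auto simp: complex_inverse)
  qed
  moreover have "complex_of_real (sqrt (real m)) \<notin> KK []" if "nsq m" for m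
  proof
    assume "complex_of_real (sqrt (real m)) \<in> KK []"
    then obtain a b where "a \<in> \<rat>" "b \<in> \<rat>" "complex_of_real (sqrt (real m)) = Complex a b" by auto
    then have "sqrt (real m) \<in> \<rat>" by (auto simp: complex_eq_iff)
    then show False using sqrt_rat_square that unfolding nsq_def by blast
  qed
  ultimately show ?case by blast
next
  case (Cons m ms)
  have IH: "\<forall>x\<in>KK ms. x \<noteq> 0 \<longrightarrow> inverse x \<in> KK ms"
    "\<And>m. nsq m \<Longrightarrow> (\<forall>m'\<in>set ms. coprime m m') \<Longrightarrow> complex_of_real (sqrt (real m)) \<notin> KK ms"
    using Cons by auto
  have inv: "inverse x \<in> KK ms" if "x \<in> KK ms" for x
    using IH(1) that by (cases "x = 0") (auto simp: K_0)
  have nm: "nsq m" and cm: "\<forall>m'\<in>set ms. coprime m m'" using Cons.prems by auto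
  define s where "s = complex_of_real (sqrt (real m))"
  have ss: "s * s = complex_of_real (real m)" unfolding s_def
    by (simp flip: of_real_mult)
  have sK: "s \<notin> KK ms" unfolding s_def using IH(2)[OF nm cm] .
  have part1: "inverse z \<in> KK (m # ms)" if z: "z \<in> KK (m # ms)" "z \<noteq> 0" for z
  proof -
    from z obtain x y where h: "x \<in> KK ms" "y \<in> KK ms" "z = x + y * s"
      by (auto simp: s_def elim!: KK_ConsE)
    define d where "d = x * x - y * y * complex_of_real (real m)"
    have dK: "d \<in> KK ms" unfolding d_def using h K_mult K_diff K_nat by metis
    have "d \<noteq> 0"
    proof
      assume d0: "d = 0"
      show False
      proof (cases "y = 0")
        case True
        then have "x = 0" using d0 by (simp add: d_def)
        then show False using True h z by simp
      next
        case False
        define t where "t = x * inverse y"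
        have tK: "t \<in> KK ms" unfolding t_def using h inv K_mult by blast
        have "t * t = s * s" using d0 False unfolding t_def d_def ss
          by (simp add: field_simps)
        then have "(t - s) * (t + s) = 0" by (simp add: algebra_simps)
        then have "s = t \<or> s = - t" by (auto simp: eq_neg_iff_add_eq_0 add.commute)
        then have "s \<in> KK ms" using tK K_uminus by auto
        then show False using sK by simp
      qed
    qed
    have "z * (x * inverse d + (- y * inverse d) * s) = 1"
    proof -
      have "z * (x * inverse d + (- y * inverse d) * s) = (x * x - y * y * (s * s)) * inverse d"
        unfolding h by (simp add: algebra_simps)
      also have "\<dots> = 1" using \<open>d \<noteq> 0\<close> unfolding ss d_def[symmetric] by simp
      finally show ?thesis .
    qed
    then have "inverse z = x * inverse d + (- y * inverse d) * s" by (rule inverse_unique)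
    then show ?thesis
      by (intro KK_ConsI[of "x * inverse d" _ "- y * inverse d"])
         (use h dK inv K_mult K_uminus in \<open>auto simp: s_def\<close>)
  qed
  have part2: "complex_of_real (sqrt (real m')) \<notin> KK (m # ms)"
    if m': "nsq m'" "\<forall>m''\<in>set (m # ms). coprime m' m''" for m'
  proof
    define s' where "s' = complex_of_real (sqrt (real m'))"
    have ss': "s' * s' = complex_of_real (real m')" unfolding s'_def
      by (simp flip: of_real_mult)
    assume "complex_of_real (sqrt (real m')) \<in> KK (m # ms)"
    then obtain x y where h: "x \<in> KK ms" "y \<in> KK ms" "s' = x + y * s"
      by (auto simp: s_def s'_def elim!: KK_ConsE)
    have eq: "complex_of_real (real m') = x * x + y * y * complex_of_real (real m) + 2 * x * y * s"
      using ss' unfolding h(3) ss[symmetric] by (simp add: algebra_simps)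
    show False
    proof (cases "y = 0")
      case True
      then have "s' \<in> KK ms" using h by simp
      then show False using IH(2)[of m'] m' unfolding s'_def by auto
    next
      case y0: False
      show False
      proof (cases "x = 0")
        case True
        then have "s' * s = y * complex_of_real (real m)" using h ss by (simp add: algebra_simps)
        moreover have "s' * s = complex_of_real (sqrt (real (m' * m)))"
          unfolding s_def s'_def by (simp add: real_sqrt_mult)
        ultimately have "complex_of_real (sqrt (real (m' * m))) \<in> KK ms"
          using h K_mult K_nat by metis
        moreover have "nsq (m' * m)" using nsq_mult m' nm by auto
        moreover have "\<forall>m''\<in>set ms. coprime (m' * m) m''" using m' cm by auto
        ultimately show False using IH(2) by blast
      next
        case x0: False
        have "2 * x * y \<noteq> 0" using x0 y0 by simp
        then have "s = (complex_of_real (real m') - x * x - y * y * complex_of_real (real m)) * inverse (2 * x * y)"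
          using eq by (simp add: field_simps)
        moreover have "2 * x * y \<in> KK ms" using h K_mult K_real_rat[of 2 ms] by simp
        ultimately have "s \<in> KK ms" using h K_mult K_diff K_nat inv by metis
        then show False using sK by simp
      qed
    qed
  qed
  show ?case
  proof (intro conjI)
    show "\<forall>x\<in>KK (m # ms). x \<noteq> 0 \<longrightarrow> inverse x \<in> KK (m # ms)" using part1 by blast
    show "\<forall>m'. nsq m' \<and> (\<forall>m''\<in>set (m # ms). coprime m' m'') \<longrightarrow>
      complex_of_real (sqrt (real m')) \<notin> KK (m # ms)" using part2 by blast
  qed
qed


lemma gamma_Complex:
  assumes "p \<ge> 1"
  shows "gamma_p p = Complex (sqrt (real (2^p - 1 :: nat)) / 2^(p-1)) ((2^(p-1) - 1) / 2^(p-1))"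
proof -
  have "real (2^p - 1 :: nat) = 2^p - 1" by (simp add: of_nat_diff)
  then show ?thesis unfolding gamma_p_def by (simp add: complex_eq_iff)
qed

lemma gamma_split:
  assumes "p \<ge> 1"
  shows "gamma_p p = \<i> * complex_of_real ((2^(p-1) - 1) / 2^(p-1))
     + complex_of_real (1 / 2^(p-1)) * complex_of_real (sqrt (real (2^p - 1 :: nat)))"
  unfolding gamma_Complex[OF assms] by (simp add: complex_eq_iff)

lemma gamma_conj_split:
  assumes "p \<ge> 1"
  shows "\<i> * complex_of_real ((2^(p-1) - 1) / 2^(p-1))
     - complex_of_real (1 / 2^(p-1)) * complex_of_real (sqrt (real (2^p - 1 :: nat))) = - cnj (gamma_p p)"
  unfolding gamma_Complex[OF assms] by (simp add: complex_eq_iff)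

lemma gamma_unit:
  assumes "p \<ge> 1"
  shows "gamma_p p * cnj (gamma_p p) = 1"
proof -
  obtain r where r: "p = Suc r" using assms by (cases p) auto
  define a :: real where "a = 2^r"
  have a0: "a > 0" unfolding a_def by simp
  have m: "real (2^p - 1 :: nat) = 2 * a - 1" unfolding r a_def by (simp add: of_nat_diff)
  have "(sqrt (real (2^p - 1 :: nat)))^2 = 2 * a - 1" using m a0
    by (simp add: m) (smt (verit) a_def one_le_power)
  then have "(sqrt (real (2^p - 1 :: nat)) / 2^(p-1))^2 + ((2^(p-1) - 1) / 2^(p-1))^2 = (1::real)"
    unfolding r using a0 by (simp add: a_def[symmetric] power_divide field_simps) (simp add: algebra_simps power2_eq_square)
  then show ?thesis unfolding complex_mult_cnj gamma_Complex[OF assms] by simp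
qed

lemma gamma_nz: "p \<ge> 1 \<Longrightarrow> gamma_p p \<noteq> 0"
  using gamma_unit[of p] by auto

lemma gamma_K:
  assumes "p \<ge> 1" "(2^p - 1) \<in> set ms"
  shows "gamma_p p \<in> KK ms"
  unfolding gamma_split[OF assms(1)]
  by (intro K_add K_mult K_ii K_real_rat K_sqrt assms(2)) auto

fun U :: "int \<Rightarrow> int \<Rightarrow> nat \<Rightarrow> int" where
  "U u D 0 = 2"
| "U u D (Suc 0) = u"
| "U u D (Suc (Suc j)) = u * U u D (Suc j) - D^2 * U u D j"

lemma U_odd: "odd u \<Longrightarrow> even D \<Longrightarrow> odd (U u D (Suc j))"
proof (induction j)
  case 0
  then show ?case by simp
next
  case (Suc j)
  then show ?case by simp
qed

lemma U_val:
  fixes w :: complex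
  assumes wc: "w * cnj w = 1" and t: "(w + cnj w) * of_int D = of_int u"
  shows "(w^j + cnj w ^ j) * of_int D ^ j = of_int (U u D j)"
proof -
  define S where "S j = (w^j + cnj w ^ j) * of_int D ^ j" for j
  have rec: "S (Suc (Suc j)) = of_int u * S (Suc j) - of_int D ^ 2 * S j" for j
  proof -
    have "w ^ Suc (Suc j) + cnj w ^ Suc (Suc j) = (w + cnj w) * (w ^ Suc j + cnj w ^ Suc j) - (w * cnj w) * (w^j + cnj w ^ j)"
      by (simp add: algebra_simps)
    then have "S (Suc (Suc j)) = ((w + cnj w) * of_int D) * S (Suc j) - of_int D ^ 2 * ((w * cnj w) * (w^j + cnj w ^ j) * of_int D ^ j)"
      unfolding S_def by (simp add: algebra_simps power2_eq_square)
    then show ?thesis unfolding t wc S_def by simp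
  qed
  have "S j = of_int (U u D j) \<and> S (Suc j) = of_int (U u D (Suc j))"
  proof (induction j)
    case 0
    then show ?case using t by (simp add: S_def)
  next
    case (Suc j)
    then show ?case using rec[of j] by simp
  qed
  then show ?thesis unfolding S_def by simp
qed

lemma gamma_not_root:
  assumes "p \<ge> 3" "M > 0"
  shows "gamma_p p ^ M \<noteq> 1"
proof
  assume gM: "gamma_p p ^ M = 1"
  obtain r where r: "p = r + 3" using assms(1) by (metis add.commute le_Suc_ex)
  define a :: real where "a = 2^r"
  have a0: "a > 0" unfolding a_def by simp
  define g where "g = gamma_p p"
  define w where "w = g^2"
  define D :: int where "D = 4 * (2^r)^2"
  define u :: int where "u = 8 * 2^r - 1 - 8 * (2^r)^2"
  have gc: "g * cnj g = 1" unfolding g_def using gamma_unit assms by simp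
  have wc: "w * cnj w = 1" unfolding w_def using gc by (simp add: power2_eq_square algebra_simps)
  have m: "real (2^p - 1 :: nat) = 8 * a - 1" unfolding r a_def by (simp add: of_nat_diff power_add)
  have sq: "(sqrt (real (2^p - 1 :: nat)))^2 = 8 * a - 1" using m a0
    by (simp add: m) (smt (verit) a_def one_le_power)
  have p1: "(2::real)^(p-1) = 4 * a" unfolding r a_def by (simp add: power_add)
  have Reg: "Re g = sqrt (real (2^p - 1 :: nat)) / (4 * a)" and Img: "Im g = (4 * a - 1) / (4 * a)"
  proof -
    have pp: "p \<ge> 1" using assms(1) by simp
    show "Re g = sqrt (real (2^p - 1 :: nat)) / (4 * a)"
      unfolding g_def gamma_Complex[OF pp] complex.sel p1 by (rule refl)
    show "Im g = (4 * a - 1) / (4 * a)"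
      unfolding g_def gamma_Complex[OF pp] complex.sel p1 by (rule refl)
  qed
  have "2 * Re w * real_of_int D = real_of_int u"
  proof -
    have "2 * Re w * real_of_int D = 2 * ((Re g)^2 - (Im g)^2) * (4 * a^2)"
      unfolding w_def Re_power2 D_def a_def by simp
    also have "\<dots> = 2 * ((8 * a - 1) / (16 * a^2) - ((4 * a - 1) / (4 * a))^2) * (4 * a^2)"
    proof -
      have "(Re g)^2 = (8 * a - 1) / (4 * a)^2" unfolding Reg power_divide sq by (rule refl)
      then show ?thesis unfolding Img by (simp add: power_mult_distrib)
    qed
    also have "\<dots> = 8 * a - 1 - 8 * a^2"
      using a0 by (simp add: field_simps power2_eq_square)
    also have "\<dots> = real_of_int u" unfolding u_def a_def by simp
    finally show ?thesis .
  qed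
  then have t: "(w + cnj w) * of_int D = of_int u"
    unfolding complex_add_cnj by (metis of_real_mult of_real_of_int_eq)
  have "(w^M + cnj w ^ M) * of_int D ^ M = of_int (U u D M)" by (rule U_val[OF wc t])
  moreover have "w^M = 1" unfolding w_def g_def using gM by (metis power_mult power_one mult.commute)
  moreover then have "cnj w ^ M = 1" by (metis complex_cnj_one complex_cnj_power)
  ultimately have "of_int (2 * D ^ M) = (of_int (U u D M) :: complex)" by simp
  then have e: "2 * D ^ M = U u D M" by (simp only: of_int_eq_iff)
  obtain j where "M = Suc j" using assms(2) by (cases M) auto
  moreover have "odd u" unfolding u_def by simp
  moreover have "even D" unfolding D_def by simp
  ultimately have "odd (U u D M)" using U_odd by simp
  then show False unfolding e[symmetric] by simp
qed


lemma mersenne_coprime: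
  assumes "prime a" "prime b" "a \<noteq> b"
  shows "coprime (2^a - 1 :: nat) (2^b - 1)"
proof -
  define d where "d = gcd (2^a - 1 :: nat) (2^b - 1)"
  have da: "[2^a = 1] (mod d)" unfolding d_def by (subst cong_altdef_nat) (auto simp: Suc_leI)
  have db: "[2^b = 1] (mod d)" unfolding d_def by (subst cong_altdef_nat) (auto simp: Suc_leI)
  have oa: "ord d 2 dvd a" using da ord_divides by blast
  have ob: "ord d 2 dvd b" using db ord_divides by blast
  have "ord d 2 = 1"
  proof (rule ccontr)
    assume "ord d 2 \<noteq> 1"
    moreover have "ord d 2 = 1 \<or> ord d 2 = a" using oa assms(1) by (auto simp: prime_nat_iff)
    ultimately have "ord d 2 = a" by blast
    then have "a dvd b" using ob by simp
    then have "a = b" by (rule primes_dvd_imp_eq[OF assms(1,2)])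
    then show False using assms(3) by contradiction
  qed
  then have "[2^1 = 1] (mod d)" by (subst ord_divides) simp
  then have "d dvd 2^1 - 1" by (rule cong_to_1_nat)
  then have "d = 1" by simp
  then show ?thesis unfolding coprime_iff_gcd_eq_1 d_def[symmetric] .
qed

lemma mersenne_nsq:
  assumes "q \<ge> 2"
  shows "nsq (2^q - 1)"
  unfolding nsq_def
proof
  assume "is_nth_power 2 (2^q - 1 :: nat)"
  then obtain k :: nat where k: "2^q - 1 = k^2" by (auto elim: is_nth_powerE)
  define r where "r = q - 2"
  have r: "q = r + 2" using assms unfolding r_def by simp
  have q1: "(1::nat) \<le> 2^q" by simp
  have "k^2 + 1 = (2::nat)^q" using k q1 by arith
  also have "\<dots> = 4 * 2^r" unfolding r by (simp add: power_add)
  finally have "k^2 + 1 = 4 * 2^r" .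
  show False
  proof (cases "even k")
    case True
    then obtain j where "k = 2 * j" by blast
    then have "4 * (j^2) + 1 = 4 * 2^r" using \<open>k^2 + 1 = 4 * 2^r\<close> by (simp add: power_mult_distrib)
    then show False by presburger
  next
    case False
    then obtain j where "k = 2 * j + 1" using oddE by blast
    then have "4 * (j^2 + j) + 2 = 4 * 2^r" using \<open>k^2 + 1 = 4 * 2^r\<close> by (simp add: power2_eq_square algebra_simps)
    then show False by presburger
  qed
qed

lemma K_pow_split:
  assumes "x \<in> KK ms" "y \<in> KK ms" "s * s \<in> KK ms"
  shows "\<exists>X\<in>KK ms. \<exists>Y\<in>KK ms. (x + y * s)^N = X + Y * s \<and> (x - y * s)^N = X - Y * s"
proof (induction N)
  case 0
  then show ?case using K_0 K_1 by force
next
  case (Suc N)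
  then obtain X Y where h: "X \<in> KK ms" "Y \<in> KK ms" "(x + y * s)^N = X + Y * s" "(x - y * s)^N = X - Y * s"
    by blast
  have e1: "(x + y * s)^Suc N = (X * x + Y * y * (s * s)) + (X * y + Y * x) * s"
    using h(3) by (simp add: algebra_simps)
  have "(x - y * s)^Suc N = (x - y * s) * (X - Y * s)"
    by (simp only: power_Suc h(4))
  then have e2: "(x - y * s)^Suc N = (X * x + Y * y * (s * s)) - (X * y + Y * x) * s"
    by (simp add: algebra_simps)
  have "X * x + Y * y * (s * s) \<in> KK ms"
    by (rule K_add[OF K_mult[OF h(1) assms(1)] K_mult[OF K_mult[OF h(2) assms(2)] assms(3)]])
  moreover have "X * y + Y * x \<in> KK ms"
    by (rule K_add[OF K_mult[OF h(1) assms(2)] K_mult[OF h(2) assms(1)]])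
  ultimately show ?case using e1 e2 by blast
qed


lemma sorted_wrt_distinct:
  "distinct xs \<Longrightarrow> (\<And>x y. x \<in> set xs \<Longrightarrow> y \<in> set xs \<Longrightarrow> x \<noteq> y \<Longrightarrow> R x y) \<Longrightarrow> sorted_wrt R xs"
  by (induction xs) auto

lemma big_case:
  fixes P :: "nat set" and n :: "nat \<Rightarrow> int"
  assumes fin: "finite P" and pr: "\<forall>p\<in>P. prime p"
    and prod1: "(\<Prod>p\<in>P. gamma_p p powi n p) = 1"
    and pP: "p \<in> P" and p3: "p \<ge> 3"
  shows "n p = 0"
proof (rule ccontr)
  assume np: "n p \<noteq> 0"
  define L where "L = sorted_list_of_set (P - {p})"
  define ms where "ms = map (\<lambda>r. 2^r - 1 :: nat) L"
  have setL: "set L = P - {p}" unfolding L_def using fin by simp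
  have setms: "set ms = (\<lambda>r. 2^r - 1 :: nat) ` (P - {p})" unfolding ms_def using setL by simp
  have "sorted_wrt (\<lambda>a b. coprime (2^a - 1 :: nat) (2^b - 1)) L"
  proof (rule sorted_wrt_distinct)
    show "distinct L" unfolding L_def by simp
    fix x y assume "x \<in> set L" "y \<in> set L" "x \<noteq> y"
    then show "coprime (2^x - 1 :: nat) (2^y - 1)" using setL pr mersenne_coprime by auto
  qed
  then have sw: "sorted_wrt coprime ms" unfolding ms_def sorted_wrt_map .
  have ns: "\<forall>m\<in>set ms. nsq m" unfolding setms using pr mersenne_nsq prime_ge_2_nat by auto
  note F = K_field[OF sw ns]
  have inv: "inverse x \<in> KK ms" if "x \<in> KK ms" for x
    using F that K_0 by (cases "x = 0") auto
  define mp where "mp = (2^p - 1 :: nat)"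
  have nmp: "nsq mp" unfolding mp_def using p3 mersenne_nsq by simp
  have cmp: "\<forall>m'\<in>set ms. coprime mp m'" unfolding setms mp_def
    using pr pP mersenne_coprime by auto
  define s where "s = complex_of_real (sqrt (real mp))"
  have sK: "s \<notin> KK ms" unfolding s_def using F nmp cmp by blast
  have p1: "p \<ge> 1" using p3 by simp
  have gK: "gamma_p r \<in> KK ms" if "r \<in> P - {p}" for r
  proof (rule gamma_K)
    show "r \<ge> 1" using that pr prime_ge_2_nat[of r] by auto
    show "2^r - 1 \<in> set ms" unfolding setms using that by blast
  qed
  have gnz: "gamma_p r \<noteq> 0" if "r \<in> P" for r
    using gamma_nz[of r] that pr prime_ge_2_nat[of r] by auto
  have powK: "gamma_p r powi n r \<in> KK ms" if "r \<in> P - {p}" for r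
    unfolding power_int_def using gK[OF that] inv K_power by auto
  define Q where "Q = (\<Prod>r\<in>P - {p}. gamma_p r powi n r)"
  have QK: "Q \<in> KK ms" unfolding Q_def using powK fin by (intro K_prod) auto
  have rel: "gamma_p p powi n p * Q = 1"
    using prod1 unfolding Q_def using prod.remove[OF fin pP, of "\<lambda>r. gamma_p r powi n r"] by simp
  define g where "g = gamma_p p"
  define N where "N = nat \<bar>n p\<bar>"
  have N0: "N > 0" unfolding N_def using np by simp
  have gN0: "g ^ N \<noteq> 0" unfolding g_def using gnz[OF pP] by simp
  obtain R where RK: "R \<in> KK ms" and gR: "g ^ N = R"
  proof (cases "n p > 0")
    case True
    then have "g powi n p = g ^ N" unfolding power_int_def N_def by simp
    then have "Q * g ^ N = 1" using rel unfolding g_def by (simp add: mult.commute)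
    then have "inverse Q = g ^ N" by (rule inverse_unique)
    moreover have "Q \<noteq> 0" using \<open>Q * g ^ N = 1\<close> by auto
    ultimately show ?thesis using that inv QK by metis
  next
    case False
    then have "g powi n p = inverse (g ^ N)" unfolding power_int_def N_def using np
      by (simp add: power_inverse)
    then have "inverse (g ^ N) * Q = 1" using rel unfolding g_def by simp
    then have "Q = g ^ N" using gN0 by (simp add: field_simps)
    then show ?thesis using that QK by metis
  qed
  define x where "x = \<i> * complex_of_real ((2^(p-1) - 1) / 2^(p-1))"
  define y where "y = complex_of_real (1 / 2^(p-1))"
  have xK: "x \<in> KK ms" unfolding x_def by (intro K_mult K_ii K_real_rat) simp
  have yK: "y \<in> KK ms" unfolding y_def by (intro K_real_rat) simp
  have ss: "s * s = complex_of_real (real mp)" unfolding s_def by (simp flip: of_real_mult)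
  have ssK: "s * s \<in> KK ms" unfolding ss by (rule K_nat)
  have gxy: "g = x + y * s" unfolding g_def x_def y_def s_def mp_def by (rule gamma_split[OF p1])
  have cxy: "x - y * s = - cnj g" unfolding g_def x_def y_def s_def mp_def by (rule gamma_conj_split[OF p1])
  obtain X Y where XY: "X \<in> KK ms" "Y \<in> KK ms" "(x + y * s)^N = X + Y * s" "(x - y * s)^N = X - Y * s"
    using K_pow_split[OF xK yK ssK, of N] by blast
  have Y0: "Y = 0"
  proof (rule ccontr)
    assume "Y \<noteq> 0"
    have "X + Y * s = R" using XY(3) gR gxy by simp
    then have "s = (R - X) * inverse Y" using \<open>Y \<noteq> 0\<close> by (simp add: field_simps)
    moreover have "(R - X) * inverse Y \<in> KK ms" using RK XY(1,2) inv K_mult K_diff by metis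
    ultimately show False using sK by simp
  qed
  have eqN: "g ^ N = (- cnj g) ^ N" using XY(3,4) Y0 gxy cxy by simp
  have gc: "g * cnj g = 1" unfolding g_def by (rule gamma_unit[OF p1])
  have "g ^ (2 * N) = g ^ N * (- cnj g) ^ N" using eqN by (simp add: mult_2 power_add)
  also have "\<dots> = (- (g * cnj g)) ^ N"
    by (subst mult_minus_right[symmetric]) (rule power_mult_distrib[symmetric])
  also have "\<dots> = (-1) ^ N" using gc by simp
  finally have "g ^ (2 * N) = (-1) ^ N" .
  then have "g ^ (4 * N) = 1"
    by (metis (no_types) power_mult mult.commute numeral_Bit0 mult_2 power_add neg_one_even_power even_add)
  moreover have "g ^ (4 * N) \<noteq> 1" unfolding g_def using gamma_not_root[OF p3] N0 by simp
  ultimately show False by simp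
qed


theorem mainTheorem10:
  fixes P :: "nat set" and q :: "nat \<Rightarrow> rat"
  assumes "finite P" and "\<forall>p\<in>P. prime p"
    and "(\<Sum>p\<in>P. of_rat (q p) * Ln (gamma_p p)) = (0::complex)"
  shows "\<forall>p\<in>P. q p = 0"
proof -
  note fin = assms(1) and pr = assms(2) and S = assms(3)
  define den where "den p = snd (quotient_of (q p))" for p
  define num where "num p = fst (quotient_of (q p))" for p
  have den_pos: "den p > 0" for p unfolding den_def by (rule quotient_of_denom_pos')
  have qdef: "q p = of_int (num p) / of_int (den p)" for p
    unfolding num_def den_def by (rule quotient_of_div) simp
  define D where "D = (\<Prod>p\<in>P. den p)"
  define n where "n p = num p * (\<Prod>r\<in>P - {p}. den r)" for p
  have "D > 0" unfolding D_def by (rule prod_pos) (rule den_pos)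
  then have D0: "D \<noteq> 0" by simp
  have nq: "of_int (n p) = q p * of_int D" if "p \<in> P" for p
  proof -
    have "D = den p * (\<Prod>r\<in>P - {p}. den r)" unfolding D_def using prod.remove[OF fin that] by simp
    moreover have "of_int (den p) \<noteq> (0::rat)" using den_pos[of p] by simp
    ultimately show ?thesis unfolding n_def qdef by (simp add: field_simps)
  qed
  define Lg where "Lg p = Ln (gamma_p p)" for p
  have S2: "(\<Sum>p\<in>P. of_int (n p) * Lg p) = (0::complex)"
  proof -
    have "(\<Sum>p\<in>P. of_int (n p) * Lg p) = (\<Sum>p\<in>P. of_int D * (of_rat (q p) * Lg p))"
    proof (rule sum.cong[OF refl])
      fix p assume "p \<in> P"
      have "(of_int (n p) :: complex) = of_rat (of_int (n p))" by simp
      also have "\<dots> = of_rat (q p) * of_int D" unfolding nq[OF \<open>p \<in> P\<close>] by (simp add: of_rat_mult)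
      finally show "of_int (n p) * Lg p = of_int D * (of_rat (q p) * Lg p)" by simp
    qed
    also have "\<dots> = of_int D * (\<Sum>p\<in>P. of_rat (q p) * Lg p)" by (simp add: sum_distrib_left)
    also have "\<dots> = 0" using S unfolding Lg_def by simp
    finally show ?thesis .
  qed
  have gnz: "gamma_p r \<noteq> 0" if "r \<in> P" for r
    using gamma_nz[of r] that pr prime_ge_2_nat[of r] by auto
  have prod1: "(\<Prod>p\<in>P. gamma_p p powi n p) = 1"
  proof -
    have "exp (\<Sum>p\<in>P. of_int (n p) * Lg p) = 1" using S2 by simp
    then have "(\<Prod>p\<in>P. exp (of_int (n p) * Lg p)) = 1" using exp_sum[OF fin] by metis
    moreover have "exp (of_int (n p) * Lg p) = gamma_p p powi n p" if "p \<in> P" for p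
      unfolding Lg_def exp_power_int[symmetric] using gnz[OF that] by simp
    ultimately show ?thesis by (metis (no_types, lifting) prod.cong)
  qed
  have big: "n p = 0" if "p \<in> P" "p \<ge> 3" for p
    by (rule big_case[OF fin pr prod1 that])
  have alln: "n p = 0" if pP: "p \<in> P" for p
  proof (cases "p \<ge> 3")
    case True
    then show ?thesis using big pP by simp
  next
    case False
    have p2: "p = 2" using False pr pP prime_ge_2_nat[of p] by fastforce
    have "(\<Sum>r\<in>P. of_int (n r) * Lg r) = of_int (n p) * Lg p + (\<Sum>r\<in>P - {p}. of_int (n r) * Lg r)"
      using sum.remove[OF fin pP] by simp
    moreover have "(\<Sum>r\<in>P - {p}. of_int (n r) * Lg r) = (0::complex)"
    proof (rule sum.neutral, rule ballI)
      fix r assume r: "r \<in> P - {p}"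
      then have "r \<ge> 2" using pr prime_ge_2_nat by auto
      moreover have "r \<noteq> 2" using r p2 by auto
      ultimately have "r \<ge> 3" by simp
      then show "of_int (n r) * Lg r = 0" using big r by simp
    qed
    ultimately have e: "of_int (n p) * Lg p = (0::complex)" using S2 by simp
    have "Lg p \<noteq> 0"
    proof
      assume "Lg p = 0"
      then have "gamma_p p = 1" unfolding Lg_def using gnz[OF pP] by (metis exp_Ln exp_zero)
      moreover have "Im (gamma_p p) = 1 / 2" unfolding p2 gamma_Complex[of 2, simplified] by simp
      ultimately show False by simp
    qed
    then show ?thesis using e by simp
  qed
  show ?thesis
  proof
    fix p assume pP: "p \<in> P"
    have "q p * of_int D = 0" using nq[OF pP] alln[OF pP] by simp
    then show "q p = 0" using D0 by simp
  qed
qed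

end
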